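(* Let $X$ be a finite topological space and $A\subseteq X$. Then $rad_X(A)\le rad_X(A^\circ)$ and $rad_X(A)\le rad_X(\overline{A})$, where $A^\circ$ and $\overline{A}$ are the interior and closure of $A$ in $X$.
   Context: For a finite topological space $X$ and $x\in X$, $U_x$ denotes the minimal open set containing $x$. A nested sequence of open sets around $x$ is a finite sequence $U_0\subsetneq U_1\subsetneq\cdots\subsetneq U_m=X$ of open sets with $U_0=U_x$ such that for each $j$ there is no open set $V$ with $U_j\subsetneq V\subsetneq U_{j+1}$. The furtherness function $\Psi:X\times X\to\{0,1,\dots,|X|-1\}$ is defined by: $\Psi(x,y)$ is the smallest integer $k\ge 0$ such that there exists a nested sequence $(U_j)_{j\ge0}$ of open sets around $x$ with $y\in U_k$. For $a\in X$ and $B\subseteq X$, $\Psi(a,B)=\min_{b\in B}\Psi(a,b)$, and for $A,B\subseteq X$, $\Psi(A,B)=\min_{a\in A}\Psi(a,B)$, with the value $\infty$ (larger than every integer) if $A$ or $B$ is empty. $\partial_X(A)$ denotes the boundary of $A$ in $X$. The center of $A$ is $Cent_X(A)=\{a\in A\mid \Psi(a,\partial_X(A))\ge\Psi(b,\partial_X(A))\ \forall b\in A\}$, and the radius is $rad_X(A)=\Psi(Cent_X(A),\partial_X(A))$. *)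

theory Defs
  imports "HOL-Analysis.Analysis" "HOL-Library.Extended_Nat"
begin

definition minimal_open :: "'a topology \<Rightarrow> 'a \<Rightarrow> 'a set" where
  "minimal_open X x = \<Inter>{U. openin X U \<and> x \<in> U}"

definition nested_seq :: "'a topology \<Rightarrow> 'a \<Rightarrow> (nat \<Rightarrow> 'a set) \<Rightarrow> nat \<Rightarrow> bool" where
  "nested_seq X x U m \<longleftrightarrow>
     U 0 = minimal_open X x \<and> U m = topspace X \<and>
     (\<forall>j\<le>m. openin X (U j)) \<and>
     (\<forall>j<m. U j \<subset> U (Suc j) \<and> \<not> (\<exists>V. openin X V \<and> U j \<subset> V \<and> V \<subset> U (Suc j)))"

definition furtherness :: "'a topology \<Rightarrow> 'a \<Rightarrow> 'a \<Rightarrow> nat" where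
  "furtherness X x y = (LEAST k. \<exists>U m. nested_seq X x U m \<and> k \<le> m \<and> y \<in> U k)"

text \<open>Psi(a,B); infinity (top of enat) if B is empty.\<close>
definition psi_pt_set :: "'a topology \<Rightarrow> 'a \<Rightarrow> 'a set \<Rightarrow> enat" where
  "psi_pt_set X a B = (INF b\<in>B. enat (furtherness X a b))"

text \<open>Psi(A,B); infinity if A or B is empty.\<close>
definition psi_sets :: "'a topology \<Rightarrow> 'a set \<Rightarrow> 'a set \<Rightarrow> enat" where
  "psi_sets X A B = (INF a\<in>A. psi_pt_set X a B)"

definition center :: "'a topology \<Rightarrow> 'a set \<Rightarrow> 'a set" where
  "center X A = {a \<in> A. \<forall>b\<in>A. psi_pt_set X b (X frontier_of A) \<le> psi_pt_set X a (X frontier_of A)}"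

definition radius :: "'a topology \<Rightarrow> 'a set \<Rightarrow> enat" where
  "radius X A = psi_sets X (center X A) (X frontier_of A)"

end

theory Submission
  imports Defs
begin

lemma chain_exists:
  assumes fin: "finite (topspace X)"
  shows "openin X U \<Longrightarrow> \<exists>V m. V 0 = U \<and> V m = topspace X \<and> (\<forall>j\<le>m. openin X (V j)) \<and>
     (\<forall>j<m. V j \<subset> V (Suc j) \<and> \<not> (\<exists>W. openin X W \<and> V j \<subset> W \<and> W \<subset> V (Suc j)))"
proof (induction "card (topspace X - U)" arbitrary: U rule: less_induct)
  case less
  show ?case
  proof (cases "U = topspace X")
    case True
    then show ?thesis using less.prems by (intro exI[of _ "\<lambda>_. U"] exI[of _ 0]) auto
  next
    case False
    have Usub: "U \<subseteq> topspace X" using less.prems openin_subset by auto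
    define S where "S = {W. openin X W \<and> U \<subset> W}"
    have "topspace X \<in> S" using False Usub S_def by auto
    have finS: "finite S" 
      by (rule finite_subset[of _ "Pow (topspace X)"]) (auto simp: S_def fin dest: openin_subset)
    obtain W where W: "W \<in> S" "\<forall>W'\<in>S. card W \<le> card W'"
      using arg_min_nat_lemma[of "\<lambda>W. W \<in> S" "topspace X" card] \<open>topspace X \<in> S\<close> by blast
    have Wsub: "W \<subseteq> topspace X" using W S_def openin_subset by auto
    have Wmin: "\<not> (\<exists>W'. openin X W' \<and> U \<subset> W' \<and> W' \<subset> W)"
    proof
      assume "\<exists>W'. openin X W' \<and> U \<subset> W' \<and> W' \<subset> W"
      then obtain W' where "openin X W'" "U \<subset> W'" "W' \<subset> W" by blast
      moreover have "finite W" using Wsub fin finite_subset by blast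
      ultimately have "card W' < card W" "W' \<in> S" using psubset_card_mono S_def by auto
      then show False using W by force
    qed
    have "card (topspace X - W) < card (topspace X - U)"
    proof (rule psubset_card_mono)
      show "finite (topspace X - U)" using fin by simp
      show "topspace X - W \<subset> topspace X - U" using W(1) Wsub Usub unfolding S_def by blast
    qed
    moreover have "openin X W" using W(1) unfolding S_def by blast
    ultimately have ex: "\<exists>V m. V 0 = W \<and> V m = topspace X \<and> (\<forall>j\<le>m. openin X (V j)) \<and>
     (\<forall>j<m. V j \<subset> V (Suc j) \<and> \<not> (\<exists>W. openin X W \<and> V j \<subset> W \<and> W \<subset> V (Suc j)))"
      by (rule less.hyps)
    from ex obtain V m where V: "V 0 = W" "V m = topspace X" "\<forall>j\<le>m. openin X (V j)"
      "\<forall>j<m. V j \<subset> V (Suc j) \<and> \<not> (\<exists>W. openin X W \<and> V j \<subset> W \<and> W \<subset> V (Suc j))"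
      by (elim exE conjE) (rule that)
    define V' where "V' = (\<lambda>j. if j = 0 then U else V (j - 1))"
    have "V' 0 = U" "V' (Suc m) = topspace X" using V V'_def by auto
    moreover have "\<forall>j\<le>Suc m. openin X (V' j)"
      using V less.prems by (auto simp: V'_def)
    moreover have "\<forall>j<Suc m. V' j \<subset> V' (Suc j) \<and> \<not> (\<exists>W. openin X W \<and> V' j \<subset> W \<and> W \<subset> V' (Suc j))"
    proof (intro allI impI)
      fix j assume j: "j < Suc m"
      show "V' j \<subset> V' (Suc j) \<and> \<not> (\<exists>W. openin X W \<and> V' j \<subset> W \<and> W \<subset> V' (Suc j))"
      proof (cases j)
        case 0 then show ?thesis using W S_def Wmin V by (auto simp: V'_def)
      next
        case (Suc i) then show ?thesis using V j by (auto simp: V'_def)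
      qed
    qed
    ultimately show ?thesis by blast
  qed
qed

lemma nested_exists:
  assumes fin: "finite (topspace X)" and x: "x \<in> topspace X"
  shows "\<exists>U m. nested_seq X x U m"
proof -
  have "openin X (minimal_open X x)"
    unfolding minimal_open_def
  proof (rule openin_Inter)
    show "finite {U. openin X U \<and> x \<in> U}"
      by (rule finite_subset[of _ "Pow (topspace X)"]) (auto simp: fin dest: openin_subset)
    show "{U. openin X U \<and> x \<in> U} \<noteq> {}" using x by blast
  qed simp
  from chain_exists[OF fin this] obtain V m where V: "V 0 = minimal_open X x" "V m = topspace X"
    "\<forall>j\<le>m. openin X (V j)"
    "\<forall>j<m. V j \<subset> V (Suc j) \<and> \<not> (\<exists>W. openin X W \<and> V j \<subset> W \<and> W \<subset> V (Suc j))"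
    by (elim exE conjE) (rule that)
  have "nested_seq X x V m" unfolding nested_seq_def using V by (intro conjI)
  then show ?thesis by (intro exI)
qed

lemma furtherness_self:
  assumes fin: "finite (topspace X)" and x: "x \<in> topspace X"
  shows "furtherness X x x = 0"
proof -
  obtain U m where "nested_seq X x U m" using nested_exists[OF assms] by blast
  moreover have "x \<in> U 0" using calculation by (auto simp: nested_seq_def minimal_open_def)
  ultimately have "\<exists>U m. nested_seq X x U m \<and> 0 \<le> m \<and> x \<in> U 0" by blast
  then show ?thesis unfolding furtherness_def by (metis (mono_tags, lifting) Least_eq_0)
qed

lemma rad_char:
  assumes "finite A" "A \<noteq> {}"
  shows "\<exists>c\<in>A. radius X A = psi_pt_set X c (X frontier_of A) \<and>
           (\<forall>b\<in>A. psi_pt_set X b (X frontier_of A) \<le> radius X A)"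
proof -
  define g where "g = (\<lambda>a. psi_pt_set X a (X frontier_of A))"
  have "Max (g ` A) \<in> g ` A" using assms by (intro Max_in) auto
  then obtain c where c0: "c \<in> A" "g c = Max (g ` A)" by auto
  have c: "c \<in> A" "\<forall>b\<in>A. g b \<le> g c"
    using c0 assms by auto
  have cen: "center X A = {a\<in>A. g a = g c}"
    using c[unfolded g_def] unfolding center_def g_def by (auto intro: order.antisym)
  have "radius X A = g c"
  proof -
    have "radius X A = (INF a\<in>{a\<in>A. g a = g c}. g a)"
      unfolding radius_def psi_sets_def cen g_def ..
    also have "\<dots> = (INF a\<in>{a\<in>A. g a = g c}. g c)" by (rule INF_cong) auto
    also have "\<dots> = g c" using c by (intro INF_const) auto
    finally show ?thesis .
  qed
  then show ?thesis using c g_def by auto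
qed

lemma psi_mono: "B \<subseteq> C \<Longrightarrow> psi_pt_set X a C \<le> psi_pt_set X a B"
  unfolding psi_pt_set_def by (rule INF_superset_mono) auto

theorem mainTheorem20:
  fixes X :: "'a topology" and A :: "'a set"
  assumes "finite (topspace X)" and "A \<subseteq> topspace X"
  shows "radius X A \<le> radius X (X interior_of A) \<and> radius X A \<le> radius X (X closure_of A)"
proof
  have finA: "finite A" by (rule finite_subset[OF assms(2) assms(1)])
  show "radius X A \<le> radius X (X interior_of A)"
  proof (cases "X interior_of A = {}")
    case True
    then show ?thesis by (simp add: radius_def psi_sets_def center_def)
  next
    case False
    let ?B = "X interior_of A"
    have BA: "?B \<subseteq> A" by (rule interior_of_subset)
    have "A \<noteq> {}" using False BA by auto
    from rad_char[OF finA this] obtain c where c: "c \<in> A" "radius X A = psi_pt_set X c (X frontier_of A)"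
      by auto
    have finB: "finite ?B" by (rule finite_subset[OF BA finA])
    from rad_char[OF finB False] have d: "\<forall>b\<in>?B. psi_pt_set X b (X frontier_of ?B) \<le> radius X ?B"
      by auto
    have fr: "X frontier_of ?B \<subseteq> X frontier_of A"
    proof -
      have "X closure_of ?B \<subseteq> X closure_of A" by (rule closure_of_mono[OF interior_of_subset])
      then show ?thesis unfolding frontier_of_def by auto
    qed
    show ?thesis
    proof (cases "c \<in> ?B")
      case True
      have "radius X A \<le> psi_pt_set X c (X frontier_of ?B)" using c(2) psi_mono[OF fr, where a=c] by simp
      also have "\<dots> \<le> radius X ?B" using d True by auto
      finally show ?thesis .
    next
      case False
      have "A \<subseteq> X closure_of A" by (rule closure_of_subset[OF assms(2)])
      then have "c \<in> X frontier_of A"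
        using False c(1) unfolding frontier_of_def by auto
      then have "psi_pt_set X c (X frontier_of A) \<le> enat (furtherness X c c)"
        unfolding psi_pt_set_def by (rule INF_lower)
      also have "furtherness X c c = 0" using furtherness_self[OF assms(1)] assms(2) c(1) by auto
      finally have "psi_pt_set X c (X frontier_of A) \<le> 0" by (simp add: zero_enat_def)
      then have "radius X A = 0" using c(2) by simp
      then show ?thesis by simp
    qed
  qed
  show "radius X A \<le> radius X (X closure_of A)"
  proof (cases "A = {}")
    case True
    then show ?thesis by (simp add: radius_def psi_sets_def center_def)
  next
    case False
    let ?C = "X closure_of A"
    from rad_char[OF finA False] obtain c where c: "c \<in> A" "radius X A = psi_pt_set X c (X frontier_of A)"
      by auto
    have finC: "finite ?C" by (rule finite_subset[OF closure_of_subset_topspace assms(1)])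
    have AC: "A \<subseteq> ?C" by (rule closure_of_subset[OF assms(2)])
    have cC: "c \<in> ?C" using c(1) AC by auto
    then have "?C \<noteq> {}" by auto
    from rad_char[OF finC this] have d: "\<forall>b\<in>?C. psi_pt_set X b (X frontier_of ?C) \<le> radius X ?C"
      by auto
    have fr: "X frontier_of ?C \<subseteq> X frontier_of A"
    proof -
      have "X interior_of A \<subseteq> X interior_of ?C" by (rule interior_of_mono[OF AC])
      then show ?thesis unfolding frontier_of_def by auto
    qed
    have "radius X A \<le> psi_pt_set X c (X frontier_of ?C)" using c(2) psi_mono[OF fr, where a=c] by simp
    also have "\<dots> \<le> radius X ?C" using d cC by auto
    finally show ?thesis .
  qed
qed

end
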